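(* Let $\mathcal N$ be a normal network on $X$ with $|X|\ge 3$, and let $\mathcal R$ be the set of triples displayed by $\mathcal N$. Let $\{a,b\}\subseteq X$ with $a\neq b$. Then $\{a,b\}$ is a cherry of $\mathcal N$ if and only if the following holds: whenever $xy|z\in\mathcal R$ and $\{a,b\}\subseteq\{x,y,z\}$, we have $\{a,b\}=\{x,y\}$.
   Context: A (rooted binary) phylogenetic network on $X$ is a rooted acyclic digraph without parallel arcs whose root has in-degree $0$ and out-degree $2$, whose out-degree-$0$ vertices (leaves) have in-degree $1$ and form the set $X$, and whose other vertices are tree vertices (in-degree $1$, out-degree $2$) or reticulations (in-degree $2$, out-degree $1$). A reticulation arc $(u,v)$ (arc into a reticulation) is a shortcut if there is another directed path from $u$ to $v$. The network is tree-child if every non-leaf vertex has a child that is a tree vertex or a leaf, and normal if it is tree-child without shortcuts. For a leaf $x$, $p_x$ denotes its parent; $\{a,b\}$ is a cherry if $p_a=p_b$. A triple $xy|z$ is the rooted binary phylogenetic tree on $\{x,y,z\}$ in which $x,y$ share a parent (so $xy|z=yx|z$). The network displays a phylogenetic tree $\mathcal T$ on a subset of $X$ if $\mathcal T$ can be obtained from the network by deleting arcs and vertices and suppressing vertices of in-degree one and out-degree one. *)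

theory Defs
  imports Main
begin

text \<open>A network is given by a vertex set V, an arc set A (a set of pairs, so no
parallel arcs), a root r and a leaf set X (leaves are the vertices themselves).\<close>

definition indeg :: "('v \<times> 'v) set \<Rightarrow> 'v \<Rightarrow> nat" where
  "indeg A v = card {u. (u, v) \<in> A}"

definition outdeg :: "('v \<times> 'v) set \<Rightarrow> 'v \<Rightarrow> nat" where
  "outdeg A v = card {w. (v, w) \<in> A}"

definition phylo_network :: "'v set \<Rightarrow> ('v \<times> 'v) set \<Rightarrow> 'v \<Rightarrow> 'v set \<Rightarrow> bool" where
  "phylo_network V A r X \<longleftrightarrow>
     finite V \<and> A \<subseteq> V \<times> V \<and> acyclic A \<and>
     r \<in> V \<and> indeg A r = 0 \<and> outdeg A r = 2 \<and>
     X = {v \<in> V. outdeg A v = 0} \<and>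
     (\<forall>x\<in>X. indeg A x = 1) \<and>
     (\<forall>v\<in>V. v \<noteq> r \<and> v \<notin> X \<longrightarrow>
        (indeg A v = 1 \<and> outdeg A v = 2) \<or> (indeg A v = 2 \<and> outdeg A v = 1))"

definition tree_vertex :: "'v set \<Rightarrow> ('v \<times> 'v) set \<Rightarrow> 'v \<Rightarrow> bool" where
  "tree_vertex V A v \<longleftrightarrow> v \<in> V \<and> indeg A v = 1 \<and> outdeg A v = 2"

definition reticulation :: "'v set \<Rightarrow> ('v \<times> 'v) set \<Rightarrow> 'v \<Rightarrow> bool" where
  "reticulation V A v \<longleftrightarrow> v \<in> V \<and> indeg A v = 2 \<and> outdeg A v = 1"

definition tree_child :: "'v set \<Rightarrow> ('v \<times> 'v) set \<Rightarrow> 'v \<Rightarrow> 'v set \<Rightarrow> bool" where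
  "tree_child V A r X \<longleftrightarrow> phylo_network V A r X \<and>
     (\<forall>v\<in>V - X. \<exists>c. (v, c) \<in> A \<and> (tree_vertex V A c \<or> c \<in> X))"

definition shortcut :: "'v set \<Rightarrow> ('v \<times> 'v) set \<Rightarrow> 'v \<Rightarrow> 'v \<Rightarrow> bool" where
  "shortcut V A u v \<longleftrightarrow> (u, v) \<in> A \<and> reticulation V A v \<and> (u, v) \<in> (A - {(u, v)})\<^sup>+"

definition normal :: "'v set \<Rightarrow> ('v \<times> 'v) set \<Rightarrow> 'v \<Rightarrow> 'v set \<Rightarrow> bool" where
  "normal V A r X \<longleftrightarrow> tree_child V A r X \<and> (\<forall>u v. \<not> shortcut V A u v)"

definition parent :: "('v \<times> 'v) set \<Rightarrow> 'v \<Rightarrow> 'v" where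
  "parent A x = (THE p. (p, x) \<in> A)"

definition cherry :: "('v \<times> 'v) set \<Rightarrow> 'v set \<Rightarrow> 'v \<Rightarrow> 'v \<Rightarrow> bool" where
  "cherry A X a b \<longleftrightarrow> a \<in> X \<and> b \<in> X \<and> parent A a = parent A b"

definition dpath :: "('v \<times> 'v) set \<Rightarrow> 'v list \<Rightarrow> 'v \<Rightarrow> 'v \<Rightarrow> bool" where
  "dpath A p u v \<longleftrightarrow> p \<noteq> [] \<and> hd p = u \<and> last p = v \<and> distinct p \<and>
     (\<forall>i. Suc i < length p \<longrightarrow> (p ! i, p ! Suc i) \<in> A)"

text \<open>The network displays the triple xy|z iff the triple (root w, internal vertex u,
arcs w->u, w->z, u->x, u->y) is obtained from it by deleting arcs and vertices and
suppressing in-degree-1/out-degree-1 vertices, i.e. iff a subdivision of the triple is a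
subgraph: vertices w, u and directed paths replacing the four arcs, pairwise meeting only in
shared endpoints.\<close>
definition displays_triple :: "'v set \<Rightarrow> ('v \<times> 'v) set \<Rightarrow> 'v set \<Rightarrow> 'v \<Rightarrow> 'v \<Rightarrow> 'v \<Rightarrow> bool" where
  "displays_triple V A X x y z \<longleftrightarrow>
     x \<in> X \<and> y \<in> X \<and> z \<in> X \<and> x \<noteq> y \<and> x \<noteq> z \<and> y \<noteq> z \<and>
     (\<exists>w u P1 P2 P3 P4. w \<in> V \<and> u \<in> V \<and> w \<noteq> u \<and>
        dpath A P1 w u \<and> dpath A P2 w z \<and> dpath A P3 u x \<and> dpath A P4 u y \<and>
        set P1 \<inter> set P2 = {w} \<and> set P1 \<inter> set P3 = {u} \<and> set P1 \<inter> set P4 = {u} \<and>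
        set P2 \<inter> set P3 = {} \<and> set P2 \<inter> set P4 = {} \<and> set P3 \<inter> set P4 = {u})"

definition displayed_triples :: "'v set \<Rightarrow> ('v \<times> 'v) set \<Rightarrow> 'v set \<Rightarrow> ('v \<times> 'v \<times> 'v) set" where
  "displayed_triples V A X = {(x, y, z). displays_triple V A X x y z}"

end

theory Submission
  imports Defs
begin

inductive pth :: "('v \<times> 'v) set \<Rightarrow> 'v \<Rightarrow> 'v list \<Rightarrow> 'v \<Rightarrow> bool" for A where
  pth_refl: "pth A u [u] u"
| pth_step: "(u, x) \<in> A \<Longrightarrow> pth A x p v \<Longrightarrow> pth A u (u # p) v"

lemma pth_hd: "pth A u p v \<Longrightarrow> \<exists>p'. p = u # p'"
  by (induction rule: pth.induct) auto

lemma pth_ends: "pth A u p v \<Longrightarrow> (u, v) \<in> A\<^sup>*"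
  by (induction rule: pth.induct) (auto intro: converse_rtrancl_into_rtrancl)

lemma pth_reach: "pth A u p v \<Longrightarrow> s \<in> set p \<Longrightarrow> (u, s) \<in> A\<^sup>* \<and> (s, v) \<in> A\<^sup>*"
proof (induction rule: pth.induct)
  case (pth_refl u)
  then show ?case by simp
next
  case (pth_step u x p v)
  then show ?case using pth_ends[OF pth_step(2)]
    by (auto intro: converse_rtrancl_into_rtrancl)
qed

lemma pth_exists: "(u, v) \<in> A\<^sup>* \<Longrightarrow> \<exists>p. pth A u p v"
  by (induction rule: converse_rtrancl_induct) (auto intro: pth.intros)

lemma pth_append: "pth A u p v \<Longrightarrow> pth A v q w \<Longrightarrow> pth A u (p @ tl q) w"
proof (induction rule: pth.induct)
  case (pth_refl u)
  then show ?case using pth_hd[OF pth_refl] by auto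
next
  case (pth_step u x p v)
  then show ?case by (auto intro: pth.intros)
qed

lemma pth_distinct: assumes ac: "acyclic A" shows "pth A u p v \<Longrightarrow> distinct p"
proof (induction rule: pth.induct)
  case (pth_refl u)
  then show ?case by simp
next
  case (pth_step u x p v)
  have "u \<notin> set p"
  proof
    assume "u \<in> set p"
    then have "(x, u) \<in> A\<^sup>*" using pth_reach[OF pth_step(2)] by blast
    then have "(u, u) \<in> A\<^sup>+" using pth_step(1) by (meson rtrancl_into_trancl2)
    then show False using ac unfolding acyclic_def by blast
  qed
  then show ?case using pth_step by auto
qed

lemma pth_arcs: "pth A u p v \<Longrightarrow> Suc i < length p \<Longrightarrow> (p ! i, p ! Suc i) \<in> A"
proof (induction arbitrary: i rule: pth.induct)
  case (pth_refl u)
  then show ?case by simp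
next
  case (pth_step u x p v)
  obtain p' where p: "p = x # p'" using pth_hd[OF pth_step(2)] by blast
  show ?case
  proof (cases i)
    case 0
    then show ?thesis using p pth_step(1) by simp
  next
    case (Suc j)
    then show ?thesis using pth_step by simp
  qed
qed

lemma pth_last: "pth A u p v \<Longrightarrow> last p = v \<and> p \<noteq> []"
  by (induction rule: pth.induct) (auto dest: pth_hd)

lemma pth_dpath: "acyclic A \<Longrightarrow> pth A u p v \<Longrightarrow> dpath A p u v"
  unfolding dpath_def using pth_last[of A u p v] pth_hd[of A u p v] pth_distinct[of A u p v]
    pth_arcs[of A u p v] by auto

lemma pth_tl_parent: "pth A u p v \<Longrightarrow> s \<in> set (tl p) \<Longrightarrow> \<exists>s'\<in>set p. (s', s) \<in> A"
proof (induction rule: pth.induct)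
  case (pth_refl u)
  then show ?case by simp
next
  case (pth_step u x p v)
  obtain p' where p: "p = x # p'" using pth_hd[OF pth_step(2)] by blast
  show ?case
  proof (cases "s = x")
    case True
    then show ?thesis using pth_step(1) by auto
  next
    case False
    then have "s \<in> set (tl p)" using pth_step(4) p by simp
    then show ?thesis using pth_step(3) by auto
  qed
qed

lemma dpath_first: "dpath A P u v \<Longrightarrow> u \<noteq> v \<Longrightarrow> (u, P ! 1) \<in> A"
proof -
  assume d: "dpath A P u v" and ne: "u \<noteq> v"
  have "length P \<noteq> 1"
  proof
    assume "length P = 1"
    then obtain x where "P = [x]" by (cases P) auto
    then show False using d ne unfolding dpath_def by auto
  qed
  moreover have "P \<noteq> []" using d unfolding dpath_def by simp
  ultimately have "Suc 0 < length P" by (cases P) auto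
  then have "(P ! 0, P ! Suc 0) \<in> A" using d unfolding dpath_def by blast
  moreover have "P ! 0 = u" using d unfolding dpath_def by (metis hd_conv_nth)
  ultimately show ?thesis by simp
qed

lemma dpath_lastarc: "dpath A P u v \<Longrightarrow> u \<noteq> v \<Longrightarrow> \<exists>s\<in>set P. (s, v) \<in> A"
proof -
  assume d: "dpath A P u v" and ne: "u \<noteq> v"
  have "length P \<noteq> 1"
  proof
    assume "length P = 1"
    then obtain x where "P = [x]" by (cases P) auto
    then show False using d ne unfolding dpath_def by auto
  qed
  moreover have "P \<noteq> []" using d unfolding dpath_def by simp
  ultimately have l: "Suc (length P - 2) < length P" "Suc (length P - 2) = length P - 1"
    by (cases P; auto)+
  then have "(P ! (length P - 2), P ! (length P - 1)) \<in> A" using d unfolding dpath_def by metis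
  moreover have "P ! (length P - 1) = v" using d unfolding dpath_def by (metis last_conv_nth)
  moreover have "P ! (length P - 2) \<in> set P" using l by simp
  ultimately show ?thesis by metis
qed



locale net =
  fixes V :: "'v set" and A :: "('v \<times> 'v) set" and r :: 'v and X :: "'v set"
  assumes nrm: "normal V A r X"
begin

lemma tc: "tree_child V A r X" using nrm unfolding normal_def by blast
lemma pn: "phylo_network V A r X" using tc unfolding tree_child_def by blast
lemma finV: "finite V" and AV: "A \<subseteq> V \<times> V" and acyc: "acyclic A" and rV: "r \<in> V"
  and indeg_r: "indeg A r = 0" and Xdef: "X = {v\<in>V. outdeg A v = 0}"
  and leaf_in: "\<And>x. x\<in>X \<Longrightarrow> indeg A x = 1"
  and inner: "\<And>v. v\<in>V \<Longrightarrow> v \<noteq> r \<Longrightarrow> v \<notin> X \<Longrightarrow>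
        (indeg A v = 1 \<and> outdeg A v = 2) \<or> (indeg A v = 2 \<and> outdeg A v = 1)"
  using pn unfolding phylo_network_def by auto

lemma tcprop: "v \<in> V \<Longrightarrow> v \<notin> X \<Longrightarrow> \<exists>c. (v, c) \<in> A \<and> (tree_vertex V A c \<or> c \<in> X)"
  using tc unfolding tree_child_def by auto

lemma inV1: "(x, y) \<in> A \<Longrightarrow> x \<in> V" and inV2: "(x, y) \<in> A \<Longrightarrow> y \<in> V"
  using AV by auto

lemma finA: "finite A" using finite_subset[OF AV] finV by auto

lemma fin_par: "finite {u. (u, v) \<in> A}"
  by (rule finite_subset[OF _ finV]) (auto dest: inV1)

lemma fin_ch: "finite {w. (v, w) \<in> A}"
  by (rule finite_subset[OF _ finV]) (auto dest: inV2)

lemma no_cycle: "(x, x) \<notin> A\<^sup>+" using acyc unfolding acyclic_def by blast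

lemma antisym: "(x, y) \<in> A\<^sup>* \<Longrightarrow> (y, x) \<in> A\<^sup>* \<Longrightarrow> x = y"
proof (rule ccontr)
  assume h: "(x, y) \<in> A\<^sup>*" "(y, x) \<in> A\<^sup>*" "x \<noteq> y"
  have "(x, y) \<in> A\<^sup>+" using h(1) h(3) by (simp add: rtrancl_eq_or_trancl)
  then have "(x, x) \<in> A\<^sup>+" using h(2) by (rule trancl_rtrancl_trancl)
  then show False using no_cycle by blast
qed

lemma cyc2: "(x, y) \<in> A \<Longrightarrow> (y, x) \<in> A\<^sup>* \<Longrightarrow> False"
proof -
  assume h: "(x, y) \<in> A" "(y, x) \<in> A\<^sup>*"
  have "(x, x) \<in> A\<^sup>+" by (rule rtrancl_into_trancl2[OF h])
  then show False using no_cycle by blast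
qed

lemma leaf_nochild: "x \<in> X \<Longrightarrow> (x, y) \<notin> A"
proof
  assume "x \<in> X" "(x, y) \<in> A"
  then have "card {w. (x, w) \<in> A} = 0" using Xdef unfolding outdeg_def by auto
  then have "{w. (x, w) \<in> A} = {}" using fin_ch by simp
  then show False using \<open>(x, y) \<in> A\<close> by auto
qed

lemma leaf_reach: "x \<in> X \<Longrightarrow> (x, y) \<in> A\<^sup>* \<Longrightarrow> y = x"
  by (erule converse_rtranclE) (auto dest: leaf_nochild)

lemma indeg1_unique: "indeg A v = 1 \<Longrightarrow> (p, v) \<in> A \<Longrightarrow> (p', v) \<in> A \<Longrightarrow> p = p'"
proof -
  assume h: "indeg A v = 1" "(p, v) \<in> A" "(p', v) \<in> A"
  obtain s where s: "{u. (u, v) \<in> A} = {s}" using h(1) unfolding indeg_def by (rule card_1_singletonE)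
  have "p \<in> {s}" "p' \<in> {s}" using h(2,3) s[symmetric] by auto
  then show ?thesis by simp
qed

lemma indeg_ge2: "(p, v) \<in> A \<Longrightarrow> (p', v) \<in> A \<Longrightarrow> p \<noteq> p' \<Longrightarrow> indeg A v \<ge> 2"
proof -
  assume h: "(p, v) \<in> A" "(p', v) \<in> A" "p \<noteq> p'"
  have "{p, p'} \<subseteq> {u. (u, v) \<in> A}" using h by auto
  then have "card {p, p'} \<le> indeg A v" unfolding indeg_def by (rule card_mono[OF fin_par])
  then show ?thesis using h by simp
qed

lemma parent_not_root: "(p, v) \<in> A \<Longrightarrow> v \<noteq> r"
proof
  assume "(p, v) \<in> A" "v = r"
  then have "{u. (u, v) \<in> A} \<noteq> {}" by auto
  then have "indeg A v \<noteq> 0" unfolding indeg_def using fin_par by simp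
  then show False using indeg_r \<open>v = r\<close> by simp
qed

lemma has_parent: "v \<in> V \<Longrightarrow> v \<noteq> r \<Longrightarrow> \<exists>p. (p, v) \<in> A"
proof -
  assume v: "v \<in> V" "v \<noteq> r"
  have "indeg A v \<noteq> 0" using v leaf_in inner by (cases "v \<in> X") force+
  then have "{u. (u, v) \<in> A} \<noteq> {}" unfolding indeg_def by (metis card.empty)
  then show ?thesis by auto
qed

lemma child_not_leaf: "(v, c) \<in> A \<Longrightarrow> v \<notin> X"
  using leaf_nochild by blast

lemma wfA: "wf A" using finite_acyclic_wf[OF finA acyc] .
lemma wfA': "wf (A\<inverse>)" using finite_acyclic_wf_converse[OF finA acyc] .

lemma root_reach: "v \<in> V \<Longrightarrow> (r, v) \<in> A\<^sup>*"
proof (induction v rule: wf_induct_rule[OF wfA])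
  case (1 v)
  show ?case
  proof (cases "v = r")
    case True then show ?thesis by simp
  next
    case False
    then obtain p where p: "(p, v) \<in> A" using has_parent 1 by blast
    then have "(r, p) \<in> A\<^sup>*" using 1 inV1 by blast
    then show ?thesis using p by simp
  qed
qed

lemma trancl_inV: "(x, y) \<in> A\<^sup>+ \<Longrightarrow> x \<in> V"
  by (drule tranclD) (auto dest: inV1)

lemma avoid_arc: "(x, y) \<in> A\<^sup>* \<Longrightarrow> \<not> ((x, u') \<in> A\<^sup>* \<and> (w', y) \<in> A\<^sup>*) \<Longrightarrow> (x, y) \<in> (A - {(u', w')})\<^sup>*"
proof (induction rule: rtrancl_induct)
  case base
  then show ?case by simp
next
  case (step y z)
  have ne: "(y, z) \<noteq> (u', w')" using step by auto
  have "\<not> ((x, u') \<in> A\<^sup>* \<and> (w', y) \<in> A\<^sup>*)"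
  proof
    assume "(x, u') \<in> A\<^sup>* \<and> (w', y) \<in> A\<^sup>*"
    then have "(x, u') \<in> A\<^sup>* \<and> (w', z) \<in> A\<^sup>*" using step(2) by auto
    then show False using step(4) by blast
  qed
  then have "(x, y) \<in> (A - {(u', w')})\<^sup>*" using step(3) by blast
  moreover have "(y, z) \<in> A - {(u', w')}" using ne step(2) by simp
  ultimately show ?case by (rule rtrancl_into_rtrancl)
qed

lemma no_shortcut: "(u, v) \<in> A \<Longrightarrow> reticulation V A v \<Longrightarrow> (u, v) \<in> (A - {(u, v)})\<^sup>+ \<Longrightarrow> False"
  using nrm unfolding normal_def shortcut_def by blast

lemma two_parents_ret: "(p, v) \<in> A \<Longrightarrow> (p', v) \<in> A \<Longrightarrow> p \<noteq> p' \<Longrightarrow> reticulation V A v"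
proof -
  assume h: "(p, v) \<in> A" "(p', v) \<in> A" "p \<noteq> p'"
  have "indeg A v \<ge> 2" using indeg_ge2 h by blast
  moreover have "v \<in> V" "v \<noteq> r" using h inV2 parent_not_root by auto
  moreover have "v \<notin> X" using leaf_in calculation by force
  ultimately show ?thesis using inner unfolding reticulation_def by force
qed

lemma tree_path: "d \<in> V \<Longrightarrow> \<exists>T c. pth A d T c \<and> c \<in> X \<and> (\<forall>s\<in>set (tl T). indeg A s = 1)"
proof (induction d rule: wf_induct_rule[OF wfA'])
  case (1 d)
  show ?case
  proof (cases "d \<in> X")
    case True
    have "pth A d [d] d" by (rule pth_refl)
    then show ?thesis using True by force
  next
    case False
    then obtain c' where c': "(d, c') \<in> A" "tree_vertex V A c' \<or> c' \<in> X"
      using tcprop 1 by blast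
    have ic: "indeg A c' = 1" using c'(2) leaf_in unfolding tree_vertex_def by blast
    have "(c', d) \<in> A\<inverse>" using c' by simp
    then obtain T c where T: "pth A c' T c" "c \<in> X" "\<forall>s\<in>set (tl T). indeg A s = 1"
      using 1 c' inV2 by blast
    obtain T' where T': "T = c' # T'" using pth_hd[OF T(1)] by blast
    have "pth A d (d # T) c" using c'(1) T(1) by (rule pth.intros)
    moreover have "\<forall>s\<in>set (tl (d # T)). indeg A s = 1" using T(3) T' ic by auto
    ultimately show ?thesis using T(2) by blast
  qed
qed

lemma tp_avoid: "pth A u p v \<Longrightarrow> \<forall>s\<in>set (tl p). indeg A s = 1 \<Longrightarrow> (y, u) \<notin> A\<^sup>* \<Longrightarrow> y \<notin> set p
   \<Longrightarrow> s \<in> set p \<Longrightarrow> (y, s) \<notin> A\<^sup>*"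
proof (induction rule: pth.induct)
  case (pth_refl u)
  then show ?case by simp
next
  case (pth_step u x p v)
  obtain p' where p: "p = x # p'" using pth_hd[OF pth_step(2)] by blast
  have ix: "indeg A x = 1" using pth_step(4) p by simp
  have "(y, x) \<notin> A\<^sup>*"
  proof
    assume yx: "(y, x) \<in> A\<^sup>*"
    have "y \<noteq> x" using pth_step(6) p by auto
    then have "(y, x) \<in> A\<^sup>+" using yx by (simp add: rtrancl_eq_or_trancl)
    then obtain z where z: "(y, z) \<in> A\<^sup>*" "(z, x) \<in> A" by (blast dest: tranclD2)
    then have "z = u" using indeg1_unique ix pth_step(1) by blast
    then show False using z pth_step(5) by simp
  qed
  moreover have "\<forall>s\<in>set (tl p). indeg A s = 1" using pth_step(4) p by simp
  ultimately show ?case using pth_step by auto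
qed

lemma min_ca: "(r0, a) \<in> A\<^sup>* \<Longrightarrow> (r0, b) \<in> A\<^sup>* \<Longrightarrow>
  \<exists>v. (v, a) \<in> A\<^sup>* \<and> (v, b) \<in> A\<^sup>* \<and> (\<forall>v'. (v, v') \<in> A\<^sup>+ \<longrightarrow> \<not> ((v', a) \<in> A\<^sup>* \<and> (v', b) \<in> A\<^sup>*))"
proof -
  assume h: "(r0, a) \<in> A\<^sup>*" "(r0, b) \<in> A\<^sup>*"
  have wf: "wf ((A\<inverse>)\<^sup>+)" using wfA' wf_trancl by blast
  obtain z where z: "z \<in> {v. (v, a) \<in> A\<^sup>* \<and> (v, b) \<in> A\<^sup>*}"
    "\<And>y. (y, z) \<in> (A\<inverse>)\<^sup>+ \<Longrightarrow> y \<notin> {v. (v, a) \<in> A\<^sup>* \<and> (v, b) \<in> A\<^sup>*}"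
    using wfE_min[OF wf, of r0 "{v. (v, a) \<in> A\<^sup>* \<and> (v, b) \<in> A\<^sup>*}"] h by blast
  have "\<forall>v'. (z, v') \<in> A\<^sup>+ \<longrightarrow> \<not> ((v', a) \<in> A\<^sup>* \<and> (v', b) \<in> A\<^sup>*)"
    using z(2) by (simp add: trancl_converse)
  then show ?thesis using z(1) by blast
qed

lemma parent_prop: "x \<in> X \<Longrightarrow> (parent A x, x) \<in> A"
proof -
  assume x: "x \<in> X"
  then have "indeg A x = 1" using leaf_in by simp
  then obtain p where "{u. (u, x) \<in> A} = {p}" unfolding indeg_def by (rule card_1_singletonE)
  then have "\<exists>!p. (p, x) \<in> A" by (metis mem_Collect_eq singletonD singletonI)
  then show ?thesis unfolding parent_def by (rule theI')
qed

lemma parent_eq: "x \<in> X \<Longrightarrow> (p, x) \<in> A \<Longrightarrow> parent A x = p"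
  using parent_prop indeg1_unique leaf_in by blast

end



lemma pth_mem_hd: "pth A u p v \<Longrightarrow> u \<in> set p"
  by (drule pth_hd) auto

lemma pth_mem_last: "pth A u p v \<Longrightarrow> v \<in> set p"
  using pth_last by (metis last_in_set)

lemma mk_triple: "x \<in> X \<Longrightarrow> y \<in> X \<Longrightarrow> z \<in> X \<Longrightarrow> x \<noteq> y \<Longrightarrow> x \<noteq> z \<Longrightarrow> y \<noteq> z
  \<Longrightarrow> w \<in> V \<Longrightarrow> u \<in> V \<Longrightarrow> w \<noteq> u \<Longrightarrow> dpath A P1 w u \<Longrightarrow> dpath A P2 w z
  \<Longrightarrow> dpath A P3 u x \<Longrightarrow> dpath A P4 u y
  \<Longrightarrow> set P1 \<inter> set P2 = {w} \<Longrightarrow> set P1 \<inter> set P3 = {u} \<Longrightarrow> set P1 \<inter> set P4 = {u}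
  \<Longrightarrow> set P2 \<inter> set P3 = {} \<Longrightarrow> set P2 \<inter> set P4 = {} \<Longrightarrow> set P3 \<inter> set P4 = {u}
  \<Longrightarrow> displays_triple V A X x y z"
  unfolding displays_triple_def
  apply (intro conjI, assumption+)
  apply (rule exI[of _ w], rule exI[of _ u], rule exI[of _ P1], rule exI[of _ P2],
      rule exI[of _ P3], rule exI[of _ P4])
  apply (intro conjI; assumption)
  done

context net begin

lemma K:
  assumes aX: "a \<in> X" and bX: "b \<in> X" and ab: "a \<noteq> b"
    and va: "(v, a) \<in> A\<^sup>*" and vb: "(v, b) \<in> A\<^sup>*"
    and vmin: "\<forall>v'. (v, v') \<in> A\<^sup>+ \<longrightarrow> \<not> ((v', a) \<in> A\<^sup>* \<and> (v', b) \<in> A\<^sup>*)"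
    and vu: "(v, u) \<in> A" and ua: "(u, a) \<in> A\<^sup>*" and une: "u \<noteq> a"
  shows "\<exists>c. displays_triple V A X a c b"
proof -
  obtain Pb where Pb: "pth A v Pb b" using pth_exists[OF vb] by blast
  have PbR: "\<And>s. s \<in> set Pb \<Longrightarrow> (v, s) \<in> A\<^sup>* \<and> (s, b) \<in> A\<^sup>*" using pth_reach[OF Pb] by blast
  have uV: "u \<in> V" using inV2[OF vu] .
  have ur: "u \<noteq> r" using parent_not_root[OF vu] .
  have "(u, a) \<in> A\<^sup>+" using ua une rtrancl_eq_or_trancl by metis
  then obtain t where ut: "(u, t) \<in> A" and ta: "(t, a) \<in> A\<^sup>*" by (blast dest: tranclD)
  have uX: "u \<notin> X" using child_not_leaf[OF ut] .
  have vu_t: "(v, u) \<in> A\<^sup>+" using vu by (rule r_into_trancl')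
  have F1: "(u, b) \<notin> A\<^sup>*" using vmin vu_t ua by blast
  have vu_ne: "v \<noteq> u" using cyc2[OF vu] by auto
  have vnb: "v \<noteq> b"
  proof
    assume "v = b" then have "(b, a) \<in> A\<^sup>*" using va by simp
    then have "a = b" by (rule leaf_reach[OF bX])
    then show False using ab by simp
  qed
  obtain Pb' where Pb': "Pb = v # Pb'" using pth_hd[OF Pb] by blast
  have bPb': "b \<in> set Pb'" using pth_mem_last[OF Pb] Pb' vnb by simp
  have uPb: "u \<notin> set Pb"
  proof
    assume "u \<in> set Pb" then have "(u, b) \<in> A\<^sup>*" using PbR by blast
    then show False using F1 by simp
  qed
  from inner[OF uV ur uX] show ?thesis
  proof
    assume tv: "indeg A u = 1 \<and> outdeg A u = 2"
    have "card {w. (u, w) \<in> A} = 2" using tv unfolding outdeg_def by simp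
    then obtain d where ud: "(u, d) \<in> A" and dt: "d \<noteq> t"
      unfolding card_2_iff' using ut by blast
    have dV: "d \<in> V" using inV2[OF ud] .
    obtain T c where T: "pth A d T c" "c \<in> X" "\<forall>s\<in>set (tl T). indeg A s = 1"
      using tree_path[OF dV] by blast
    have TR: "\<And>s. s \<in> set T \<Longrightarrow> (d, s) \<in> A\<^sup>* \<and> (s, c) \<in> A\<^sup>*" using pth_reach[OF T(1)] by blast
    obtain Pt where Pt: "pth A t Pt a" using pth_exists[OF ta] by blast
    have PtR: "\<And>s. s \<in> set Pt \<Longrightarrow> (t, s) \<in> A\<^sup>* \<and> (s, a) \<in> A\<^sup>*" using pth_reach[OF Pt] by blast
    have F2: "(t, d) \<notin> A\<^sup>*"
    proof
      assume td: "(t, d) \<in> A\<^sup>*"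
      then have "(t, d) \<in> A\<^sup>+" using dt rtrancl_eq_or_trancl by metis
      then obtain p' where p': "(t, p') \<in> A\<^sup>*" "(p', d) \<in> A" by (blast dest: tranclD2)
      have "p' \<noteq> u" using p'(1) cyc2[OF ut] by blast
      then have rd: "reticulation V A d" using two_parents_ret[OF ud p'(2)] by blast
      have "\<not> ((t, u) \<in> A\<^sup>* \<and> (d, d) \<in> A\<^sup>*)" using cyc2[OF ut] by blast
      then have "(t, d) \<in> (A - {(u, d)})\<^sup>*" using avoid_arc[OF td] by blast
      moreover have "(u, t) \<in> A - {(u, d)}" using ut dt by simp
      ultimately have "(u, d) \<in> (A - {(u, d)})\<^sup>+" by (meson rtrancl_into_trancl2)
      then show False using no_shortcut[OF ud rd] by blast
    qed
    have F3: "t \<notin> set T"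
    proof
      assume tT: "t \<in> set T"
      obtain T' where T': "T = d # T'" using pth_hd[OF T(1)] by blast
      have "t \<in> set (tl T)" using tT T' dt by auto
      then have it: "indeg A t = 1" using T(3) by blast
      obtain s' where s': "s' \<in> set T" "(s', t) \<in> A" using pth_tl_parent[OF T(1) \<open>t \<in> set (tl T)\<close>] by blast
      have "s' = u" using indeg1_unique[OF it s'(2) ut] .
      then have "(d, u) \<in> A\<^sup>*" using TR s'(1) by blast
      then show False using cyc2[OF ud] by blast
    qed
    have tpa: "\<And>s. s \<in> set T \<Longrightarrow> (t, s) \<notin> A\<^sup>*"
      using tp_avoid[OF T(1) T(3) F2 F3] by blast
    have vPt: "v \<notin> set Pt"
    proof
      assume "v \<in> set Pt" then have "(t, v) \<in> A\<^sup>*" using PtR by blast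
      then have "(u, v) \<in> A\<^sup>*" using ut by (meson converse_rtrancl_into_rtrancl)
      then show False using cyc2[OF vu] by blast
    qed
    have vT: "v \<notin> set T"
    proof
      assume "v \<in> set T" then have "(d, v) \<in> A\<^sup>*" using TR by blast
      then have "(u, v) \<in> A\<^sup>*" using ud by (meson converse_rtrancl_into_rtrancl)
      then show False using cyc2[OF vu] by blast
    qed
    have uPt: "u \<notin> set Pt" using PtR cyc2[OF ut] by blast
    have uT: "u \<notin> set T" using TR cyc2[OF ud] by blast
    have PtPb: "\<And>s. s \<in> set Pt \<Longrightarrow> s \<notin> set Pb"
    proof
      fix s assume s: "s \<in> set Pt" "s \<in> set Pb"
      have "(u, s) \<in> A\<^sup>*" using PtR[OF s(1)] ut by (meson converse_rtrancl_into_rtrancl)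
      then have "(v, s) \<in> A\<^sup>+" using vu by (meson rtrancl_into_trancl2)
      then show False using vmin PtR[OF s(1)] PbR[OF s(2)] by blast
    qed
    have TPb: "\<And>s. s \<in> set T \<Longrightarrow> s \<notin> set Pb"
    proof
      fix s assume s: "s \<in> set T" "s \<in> set Pb"
      have "(u, s) \<in> A\<^sup>*" using TR[OF s(1)] ud by (meson converse_rtrancl_into_rtrancl)
      then have "(u, b) \<in> A\<^sup>*" using PbR[OF s(2)] by (meson rtrancl_trans)
      then show False using F1 by blast
    qed
    have PtT: "\<And>s. s \<in> set Pt \<Longrightarrow> s \<notin> set T" using tpa PtR by blast
    have aPt: "a \<in> set Pt" using pth_mem_last[OF Pt] .
    have cT: "c \<in> set T" using pth_mem_last[OF T(1)] .
    have bPb: "b \<in> set Pb" using pth_mem_last[OF Pb] .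
    have vPb: "v \<in> set Pb" using pth_mem_hd[OF Pb] .
    have ca: "a \<noteq> c" using PtT aPt cT by blast
    have cb: "c \<noteq> b" using TPb cT bPb by blast
    have vV: "v \<in> V" using inV1[OF vu] .
    have P1: "dpath A [v, u] v u" using pth_dpath[OF acyc] vu pth.intros by metis
    have P2: "dpath A Pb v b" using pth_dpath[OF acyc Pb] .
    have P3: "dpath A (u # Pt) u a" using pth_dpath[OF acyc] ut Pt pth.intros by metis
    have P4: "dpath A (u # T) u c" using pth_dpath[OF acyc] ud T(1) pth.intros by metis
    have s12: "set [v, u] \<inter> set Pb = {v}" using vPb uPb by auto
    have s13: "set [v, u] \<inter> set (u # Pt) = {u}" using vPt vu_ne by auto
    have s14: "set [v, u] \<inter> set (u # T) = {u}" using vT vu_ne by auto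
    have s23: "set Pb \<inter> set (u # Pt) = {}" using uPb PtPb by auto
    have s24: "set Pb \<inter> set (u # T) = {}" using uPb TPb by auto
    have s34: "set (u # Pt) \<inter> set (u # T) = {u}" using PtT by auto
    have "displays_triple V A X a c b"
      by (rule mk_triple[OF aX T(2) bX ca ab cb vV uV vu_ne P1 P2 P3 P4 s12 s13 s14 s23 s24 s34])
    then show ?thesis by blast
  next
    assume rt: "indeg A u = 2 \<and> outdeg A u = 1"
    have ret: "reticulation V A u" using rt uV unfolding reticulation_def by simp
    have "card {w. (w, u) \<in> A} = 2" using rt unfolding indeg_def by simp
    then obtain q where qu: "(q, u) \<in> A" and qv: "q \<noteq> v"
      unfolding card_2_iff' using vu by blast
    have qV: "q \<in> V" using inV1[OF qu] .
    have qX: "q \<notin> X" using child_not_leaf[OF qu] .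
    obtain d where qd: "(q, d) \<in> A" and dd: "tree_vertex V A d \<or> d \<in> X" using tcprop[OF qV qX] by blast
    have id: "indeg A d = 1" using dd leaf_in unfolding tree_vertex_def by blast
    have du: "d \<noteq> u" using id rt by auto
    have dV: "d \<in> V" using inV2[OF qd] .
    obtain T c where T: "pth A d T c" "c \<in> X" "\<forall>s\<in>set (tl T). indeg A s = 1"
      using tree_path[OF dV] by blast
    have TR: "\<And>s. s \<in> set T \<Longrightarrow> (d, s) \<in> A\<^sup>* \<and> (s, c) \<in> A\<^sup>*" using pth_reach[OF T(1)] by blast
    obtain Pu where Pu: "pth A u Pu a" using pth_exists[OF ua] by blast
    have PuR: "\<And>s. s \<in> set Pu \<Longrightarrow> (u, s) \<in> A\<^sup>* \<and> (s, a) \<in> A\<^sup>*" using pth_reach[OF Pu] by blast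
    have N1: "(v, q) \<notin> A\<^sup>*"
    proof
      assume h: "(v, q) \<in> A\<^sup>*"
      have "\<not> ((v, v) \<in> A\<^sup>* \<and> (u, q) \<in> A\<^sup>*)" using cyc2[OF qu] by blast
      then have "(v, q) \<in> (A - {(v, u)})\<^sup>*" using avoid_arc[OF h] by blast
      moreover have "(q, u) \<in> A - {(v, u)}" using qu qv by simp
      ultimately have "(v, u) \<in> (A - {(v, u)})\<^sup>+" by (meson rtrancl_into_trancl1)
      then show False using no_shortcut[OF vu ret] by blast
    qed
    have N2: "(q, v) \<notin> A\<^sup>*"
    proof
      assume h: "(q, v) \<in> A\<^sup>*"
      have "\<not> ((q, q) \<in> A\<^sup>* \<and> (u, v) \<in> A\<^sup>*)" using cyc2[OF vu] by blast
      then have "(q, v) \<in> (A - {(q, u)})\<^sup>*" using avoid_arc[OF h] by blast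
      moreover have "(v, u) \<in> A - {(q, u)}" using vu qv by simp
      ultimately have "(q, u) \<in> (A - {(q, u)})\<^sup>+" by (meson rtrancl_into_trancl1)
      then show False using no_shortcut[OF qu ret] by blast
    qed
    have vV: "v \<in> V" using inV1[OF vu] .
    obtain w where w: "(w, v) \<in> A\<^sup>*" "(w, q) \<in> A\<^sup>*"
      and wmin: "\<forall>v'. (w, v') \<in> A\<^sup>+ \<longrightarrow> \<not> ((v', v) \<in> A\<^sup>* \<and> (v', q) \<in> A\<^sup>*)"
      using min_ca[OF root_reach[OF vV] root_reach[OF qV]] by blast
    obtain W1 where W1: "pth A w W1 v" using pth_exists[OF w(1)] by blast
    obtain W2 where W2: "pth A w W2 q" using pth_exists[OF w(2)] by blast
    have W1R: "\<And>s. s \<in> set W1 \<Longrightarrow> (w, s) \<in> A\<^sup>* \<and> (s, v) \<in> A\<^sup>*" using pth_reach[OF W1] by blast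
    have W2R: "\<And>s. s \<in> set W2 \<Longrightarrow> (w, s) \<in> A\<^sup>* \<and> (s, q) \<in> A\<^sup>*" using pth_reach[OF W2] by blast
    have W12: "\<And>s. s \<in> set W1 \<Longrightarrow> s \<in> set W2 \<Longrightarrow> s = w"
    proof (rule ccontr)
      fix s assume s: "s \<in> set W1" "s \<in> set W2" "s \<noteq> w"
      then have "(w, s) \<in> A\<^sup>+" using W1R rtrancl_eq_or_trancl by metis
      then show False using wmin W1R[OF s(1)] W2R[OF s(2)] by blast
    qed
    have wq: "w \<noteq> q" using w(1) N2 by blast
    have wV: "w \<in> V" using w(2) wq rtrancl_eq_or_trancl trancl_inV by metis
    have P2p: "pth A w (W1 @ Pb') b" using pth_append[OF W1 Pb] Pb' by simp
    have Pb'R: "\<And>s. s \<in> set Pb' \<Longrightarrow> (v, s) \<in> A\<^sup>* \<and> (s, b) \<in> A\<^sup>*" using PbR Pb' by simp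
    have vd: "(v, d) \<notin> A\<^sup>*"
    proof
      assume h: "(v, d) \<in> A\<^sup>*"
      show False
      proof (cases "v = d")
        case True then show ?thesis using qd N2 by blast
      next
        case False
        then have "(v, d) \<in> A\<^sup>+" using h rtrancl_eq_or_trancl by metis
        then obtain p' where p': "(v, p') \<in> A\<^sup>*" "(p', d) \<in> A" by (blast dest: tranclD2)
        have "p' = q" using indeg1_unique[OF id p'(2) qd] .
        then show False using p' N1 by blast
      qed
    qed
    have vT: "v \<notin> set T"
    proof
      assume "v \<in> set T" then have "(d, v) \<in> A\<^sup>*" using TR by blast
      then have "(q, v) \<in> A\<^sup>*" using qd by (meson converse_rtrancl_into_rtrancl)
      then show False using N2 by blast
    qed
    have tpv: "\<And>s. s \<in> set T \<Longrightarrow> (v, s) \<notin> A\<^sup>*" using tp_avoid[OF T(1) T(3) vd vT] by blast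
    have ud: "(u, d) \<notin> A\<^sup>*"
    proof
      assume h: "(u, d) \<in> A\<^sup>*"
      then have "(u, d) \<in> A\<^sup>+" using du by (simp add: rtrancl_eq_or_trancl)
      then obtain p' where p': "(u, p') \<in> A\<^sup>*" "(p', d) \<in> A" by (blast dest: tranclD2)
      have "p' = q" using indeg1_unique[OF id p'(2) qd] .
      then have "(u, q) \<in> A\<^sup>*" using p'(1) by simp
      then show False by (rule cyc2[OF qu])
    qed
    have uT: "u \<notin> set T"
    proof
      assume uT: "u \<in> set T"
      obtain T' where T': "T = d # T'" using pth_hd[OF T(1)] by blast
      have "u \<in> set (tl T)" using uT T' du by auto
      then have "indeg A u = 1" using T(3) by blast
      then show False using rt by simp
    qed
    have tpu: "\<And>s. s \<in> set T \<Longrightarrow> (u, s) \<notin> A\<^sup>*" using tp_avoid[OF T(1) T(3) ud uT] by blast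
    have qPu: "q \<notin> set Pu" using PuR cyc2[OF qu] by blast
    have qT: "q \<notin> set T" using TR cyc2[OF qd] by blast
    have qW1: "q \<notin> set W1" using W1R N2 by blast
    have qPb': "q \<notin> set Pb'" using Pb'R N1 by blast
    have W2Pb': "\<And>s. s \<in> set W2 \<Longrightarrow> s \<notin> set Pb'"
    proof
      fix s assume s: "s \<in> set W2" "s \<in> set Pb'"
      have "(v, q) \<in> A\<^sup>*" using rtrancl_trans[of v s A q] Pb'R[OF s(2)] W2R[OF s(1)] by blast
      then show False using N1 by blast
    qed
    have W2Pu: "\<And>s. s \<in> set Pu \<Longrightarrow> s \<notin> set W2"
    proof
      fix s assume s: "s \<in> set Pu" "s \<in> set W2"
      have "(u, q) \<in> A\<^sup>*" using PuR[OF s(1)] W2R[OF s(2)] by (meson rtrancl_trans)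
      then show False using cyc2[OF qu] by blast
    qed
    have W2T: "\<And>s. s \<in> set T \<Longrightarrow> s \<notin> set W2"
    proof
      fix s assume s: "s \<in> set T" "s \<in> set W2"
      have "(d, q) \<in> A\<^sup>*" using TR[OF s(1)] W2R[OF s(2)] by (meson rtrancl_trans)
      then show False using cyc2[OF qd] by blast
    qed
    have W1Pu: "\<And>s. s \<in> set Pu \<Longrightarrow> s \<notin> set W1"
    proof
      fix s assume s: "s \<in> set Pu" "s \<in> set W1"
      have "(u, v) \<in> A\<^sup>*" using PuR[OF s(1)] W1R[OF s(2)] by (meson rtrancl_trans)
      then show False using cyc2[OF vu] by blast
    qed
    have W1T: "\<And>s. s \<in> set T \<Longrightarrow> s \<notin> set W1"
    proof
      fix s assume s: "s \<in> set T" "s \<in> set W1"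
      have "(d, v) \<in> A\<^sup>*" using TR[OF s(1)] W1R[OF s(2)] by (meson rtrancl_trans)
      then have "(q, v) \<in> A\<^sup>*" using qd by (meson converse_rtrancl_into_rtrancl)
      then show False using N2 by blast
    qed
    have PuPb': "\<And>s. s \<in> set Pu \<Longrightarrow> s \<notin> set Pb'"
    proof
      fix s assume s: "s \<in> set Pu" "s \<in> set Pb'"
      have "(u, s) \<in> A\<^sup>*" using PuR[OF s(1)] by blast
      then have "(v, s) \<in> A\<^sup>+" using vu by (meson rtrancl_into_trancl2)
      then show False using vmin PuR[OF s(1)] Pb'R[OF s(2)] by blast
    qed
    have TPb': "\<And>s. s \<in> set T \<Longrightarrow> s \<notin> set Pb'" using tpv Pb'R by blast
    have PuT: "\<And>s. s \<in> set Pu \<Longrightarrow> s \<notin> set T" using tpu PuR by blast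
    have aPu: "a \<in> set Pu" using pth_mem_last[OF Pu] .
    have cT: "c \<in> set T" using pth_mem_last[OF T(1)] .
    have ca: "a \<noteq> c" using PuT aPu cT by blast
    have cb: "c \<noteq> b" using TPb' cT bPb' by blast
    have wW1: "w \<in> set W1" using pth_mem_hd[OF W1] .
    have wW2: "w \<in> set W2" using pth_mem_hd[OF W2] .
    have qW2: "q \<in> set W2" using pth_mem_last[OF W2] .
    have P1: "dpath A W2 w q" using pth_dpath[OF acyc W2] .
    have P2: "dpath A (W1 @ Pb') w b" using pth_dpath[OF acyc P2p] .
    have P3: "dpath A (q # Pu) q a" using pth_dpath[OF acyc] qu Pu pth.intros by metis
    have P4: "dpath A (q # T) q c" using pth_dpath[OF acyc] qd T(1) pth.intros by metis
    have s12: "set W2 \<inter> set (W1 @ Pb') = {w}"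
    proof
      show "set W2 \<inter> set (W1 @ Pb') \<subseteq> {w}"
      proof
        fix s assume s: "s \<in> set W2 \<inter> set (W1 @ Pb')"
        then have s1: "s \<in> set W2" and s2: "s \<in> set W1 \<or> s \<in> set Pb'" by auto
        show "s \<in> {w}"
        proof (cases "s \<in> set W1")
          case True then show ?thesis using W12[OF True s1] by simp
        next
          case False then show ?thesis using s2 W2Pb'[OF s1] by simp
        qed
      qed
      show "{w} \<subseteq> set W2 \<inter> set (W1 @ Pb')" using wW1 wW2 by simp
    qed
    have s13: "set W2 \<inter> set (q # Pu) = {q}" using qW2 W2Pu by auto
    have s14: "set W2 \<inter> set (q # T) = {q}" using qW2 W2T by auto
    have s23: "set (W1 @ Pb') \<inter> set (q # Pu) = {}" using qW1 qPb' W1Pu PuPb' by auto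
    have s24: "set (W1 @ Pb') \<inter> set (q # T) = {}" using qW1 qPb' W1T TPb' by auto
    have s34: "set (q # Pu) \<inter> set (q # T) = {q}" using PuT by auto
    have "displays_triple V A X a c b"
      by (rule mk_triple[OF aX T(2) bX ca ab cb wV qV wq P1 P2 P3 P4 s12 s13 s14 s23 s24 s34])
    then show ?thesis by blast
  qed
qed

end


lemma disp_basic: "displays_triple V A X x y z \<Longrightarrow> x \<in> X \<and> y \<in> X \<and> z \<in> X \<and> x \<noteq> y \<and> x \<noteq> z \<and> y \<noteq> z"
  unfolding displays_triple_def by (elim conjE) (intro conjI; assumption)

lemma disp_obtain:
  assumes "displays_triple V A X x y z"
  obtains w u P1 P2 P3 P4 where "w \<in> V" "u \<in> V" "w \<noteq> u"
        "dpath A P1 w u" "dpath A P2 w z" "dpath A P3 u x" "dpath A P4 u y"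
        "set P1 \<inter> set P2 = {w}" "set P1 \<inter> set P3 = {u}" "set P1 \<inter> set P4 = {u}"
        "set P2 \<inter> set P3 = {}" "set P2 \<inter> set P4 = {}" "set P3 \<inter> set P4 = {u}"
  apply (insert assms)
  unfolding displays_triple_def
  apply (elim conjE exE)
  subgoal for w u P1 P2 P3 P4 by (rule that[of w u P1 P2 P3 P4]; assumption)
  done

context net begin

lemma disp_sym: "displays_triple V A X x y z \<Longrightarrow> displays_triple V A X y x z"
proof -
  assume d: "displays_triple V A X x y z"
  then have xyz: "x \<in> X" "y \<in> X" "z \<in> X" "x \<noteq> y" "x \<noteq> z" "y \<noteq> z"
    using disp_basic[OF d] by auto
  obtain w u P1 P2 P3 P4 where H: "w \<in> V" "u \<in> V" "w \<noteq> u"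
        "dpath A P1 w u" "dpath A P2 w z" "dpath A P3 u x" "dpath A P4 u y"
        "set P1 \<inter> set P2 = {w}" "set P1 \<inter> set P3 = {u}" "set P1 \<inter> set P4 = {u}"
        "set P2 \<inter> set P3 = {}" "set P2 \<inter> set P4 = {}" "set P3 \<inter> set P4 = {u}"
    by (rule disp_obtain[OF d])
  have s: "set P4 \<inter> set P3 = {u}" using H(13) by (simp add: Int_commute)
  show ?thesis
    by (rule mk_triple[OF xyz(2) xyz(1) xyz(3) xyz(4)[symmetric] xyz(6) xyz(5) H(1-5) H(7) H(6)
          H(8) H(10) H(9) H(12) H(11) s])
qed

lemma disp_bad: "displays_triple V A X x y z \<Longrightarrow> (p, z) \<in> A \<Longrightarrow> (p, x) \<in> A \<Longrightarrow> False"
proof -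
  assume d: "displays_triple V A X x y z" and pz: "(p, z) \<in> A" and px: "(p, x) \<in> A"
  from d have xX: "x \<in> X" and yX: "y \<in> X" and zX: "z \<in> X" and xy: "x \<noteq> y"
    using disp_basic[OF d] by auto
  obtain w u P1 P2 P3 P4 where H: "w \<in> V" "u \<in> V" "w \<noteq> u"
        "dpath A P1 w u" "dpath A P2 w z" "dpath A P3 u x" "dpath A P4 u y"
        "set P1 \<inter> set P2 = {w}" "set P1 \<inter> set P3 = {u}" "set P1 \<inter> set P4 = {u}"
        "set P2 \<inter> set P3 = {}" "set P2 \<inter> set P4 = {}" "set P3 \<inter> set P4 = {u}"
    by (rule disp_obtain[OF d])
  note wu = H(3) and D1 = H(4) and D2 = H(5) and D3 = H(6) and D4 = H(7) and s23 = H(11)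
  have wz: "w \<noteq> z"
  proof
    assume "w = z"
    then have "(z, P1 ! 1) \<in> A" using dpath_first[OF D1] wu by simp
    then show False using leaf_nochild[OF zX] by blast
  qed
  have ux: "u \<noteq> x"
  proof
    assume "u = x"
    then have "(x, P4 ! 1) \<in> A" using dpath_first[OF D4] xy by simp
    then show False using leaf_nochild[OF xX] by blast
  qed
  obtain s where s: "s \<in> set P2" "(s, z) \<in> A" using dpath_lastarc[OF D2 wz] by blast
  obtain s' where s': "s' \<in> set P3" "(s', x) \<in> A" using dpath_lastarc[OF D3 ux] by blast
  have "s = p" using indeg1_unique[OF leaf_in[OF zX] s(2) pz] .
  moreover have "s' = p" using indeg1_unique[OF leaf_in[OF xX] s'(2) px] .
  ultimately show False using s(1) s'(1) s23 by blast
qed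

end

theorem lemma2:
  fixes V :: "'v set" and A :: "('v \<times> 'v) set" and r :: 'v and X :: "'v set"
  assumes "normal V A r X" and "card X \<ge> 3"
    and "a \<in> X" and "b \<in> X" and "a \<noteq> b"
  shows "cherry A X a b \<longleftrightarrow>
    (\<forall>x y z. (x, y, z) \<in> displayed_triples V A X \<and> {a, b} \<subseteq> {x, y, z} \<longrightarrow> {a, b} = {x, y})"
proof -
  interpret net V A r X using assms(1) by unfold_locales
  have aX: "a \<in> X" and bX: "b \<in> X" and ab: "a \<noteq> b" using assms by auto
  show ?thesis
  proof
    assume ch: "cherry A X a b"
    define p where "p = parent A a"
    have pa: "(p, a) \<in> A" unfolding p_def using parent_prop[OF aX] .
    have pb: "(p, b) \<in> A" using parent_prop[OF bX] ch unfolding p_def cherry_def by simp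
    show "\<forall>x y z. (x, y, z) \<in> displayed_triples V A X \<and> {a, b} \<subseteq> {x, y, z} \<longrightarrow> {a, b} = {x, y}"
    proof (intro allI impI)
      fix x y z
      assume h: "(x, y, z) \<in> displayed_triples V A X \<and> {a, b} \<subseteq> {x, y, z}"
      then have d: "displays_triple V A X x y z" unfolding displayed_triples_def by simp
      have sub: "{a, b} \<subseteq> {x, y, z}" using h by simp
      show "{a, b} = {x, y}"
      proof (cases "z = a")
        case True
        have "b = x \<or> b = y" using sub True ab by auto
        then show ?thesis
        proof
          assume "b = x" then show ?thesis using disp_bad[OF d, of p] True pa pb by simp
        next
          assume "b = y" then show ?thesis using disp_bad[OF disp_sym[OF d], of p] True pa pb by simp
        qed
      next
        case za: False
        show ?thesis
        proof (cases "z = b")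
          case True
          have "a = x \<or> a = y" using sub True ab by auto
          then show ?thesis
          proof
            assume "a = x" then show ?thesis using disp_bad[OF d, of p] True pa pb by simp
          next
            assume "a = y" then show ?thesis using disp_bad[OF disp_sym[OF d], of p] True pa pb by simp
          qed
        next
          case False
          then have "a \<in> {x, y}" "b \<in> {x, y}" using sub za by auto
          moreover have "x \<noteq> y" using d unfolding displays_triple_def by simp
          ultimately show ?thesis using ab by auto
        qed
      qed
    qed
  next
    assume Q: "\<forall>x y z. (x, y, z) \<in> displayed_triples V A X \<and> {a, b} \<subseteq> {x, y, z} \<longrightarrow> {a, b} = {x, y}"
    show "cherry A X a b"
    proof (rule ccontr)
      assume nch: "\<not> cherry A X a b"
      have aV: "a \<in> V" and bV: "b \<in> V" using aX bX Xdef by auto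
      obtain v where va: "(v, a) \<in> A\<^sup>*" and vb: "(v, b) \<in> A\<^sup>*"
        and vmin: "\<forall>v'. (v, v') \<in> A\<^sup>+ \<longrightarrow> \<not> ((v', a) \<in> A\<^sup>* \<and> (v', b) \<in> A\<^sup>*)"
        using min_ca[OF root_reach[OF aV] root_reach[OF bV]] by blast
      have vmin': "\<forall>v'. (v, v') \<in> A\<^sup>+ \<longrightarrow> \<not> ((v', b) \<in> A\<^sup>* \<and> (v', a) \<in> A\<^sup>*)"
        using vmin by blast
      have vna: "v \<noteq> a"
      proof
        assume "v = a" then have "(a, b) \<in> A\<^sup>*" using vb by simp
        then have "b = a" by (rule leaf_reach[OF aX])
        then show False using ab by simp
      qed
      have vnb: "v \<noteq> b"
      proof
        assume "v = b" then have "(b, a) \<in> A\<^sup>*" using va by simp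
        then have "a = b" by (rule leaf_reach[OF bX])
        then show False using ab by simp
      qed
      have "(v, a) \<in> A\<^sup>+" using va vna by (simp add: rtrancl_eq_or_trancl)
      then obtain ua where vua: "(v, ua) \<in> A" and uaa: "(ua, a) \<in> A\<^sup>*" by (blast dest: tranclD)
      have "(v, b) \<in> A\<^sup>+" using vb vnb by (simp add: rtrancl_eq_or_trancl)
      then obtain ub where vub: "(v, ub) \<in> A" and ubb: "(ub, b) \<in> A\<^sup>*" by (blast dest: tranclD)
      show False
      proof (cases "ua = a")
        case False
        obtain c where c: "displays_triple V A X a c b"
          using K[OF aX bX ab va vb vmin vua uaa False] by blast
        have "c \<noteq> b" using c unfolding displays_triple_def by simp
        moreover have "(a, c, b) \<in> displayed_triples V A X" using c unfolding displayed_triples_def by simp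
        moreover have "{a, b} \<subseteq> {a, c, b}" by auto
        ultimately have "{a, b} = {a, c}" using Q by blast
        then have "b \<in> {a, c}" by blast
        then show False using ab \<open>c \<noteq> b\<close> by auto
      next
        case ua: True
        show False
        proof (cases "ub = b")
          case False
          obtain c where c: "displays_triple V A X b c a"
            using K[OF bX aX ab[symmetric] vb va vmin' vub ubb False] by blast
          have "c \<noteq> a" using c unfolding displays_triple_def by simp
          moreover have "(b, c, a) \<in> displayed_triples V A X" using c unfolding displayed_triples_def by simp
          moreover have "{a, b} \<subseteq> {b, c, a}" by auto
          ultimately have "{a, b} = {b, c}" using Q by blast
          then have "a \<in> {b, c}" by blast
          then show False using ab \<open>c \<noteq> a\<close> by auto
        next
          case True
          have "parent A a = v" using parent_eq[OF aX] vua ua by simp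
          moreover have "parent A b = v" using parent_eq[OF bX] vub True by simp
          ultimately show False using nch aX bX unfolding cherry_def by simp
        qed
      qed
    qed
  qed
qed


end
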